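(* Let $w\in\mathcal W_n$ have $N$ blocks and suppose its block orbit $\langle w\rangle_\beta=\{\beta^k w:0\le k<N\}$ contains $N$ words. If $v$ is chosen uniformly at random from $\langle w\rangle_\beta$, then for all $i,k\in\{1,\dots,N\}$ the probability that the block of rank $i$ of $v$ is at position $k$ (i.e. $r_k(v)=i$) equals $\frac1N$.
   Context: Let $\mathcal A=\{a_1<a_2<\dots\}$ be a finite or countably infinite totally ordered alphabet. Lexicographic order: $u<v$ if $u$ is a proper prefix of $v$, or $u=ra_is$, $v=ra_jt$ with $i<j$. A word is primitive if it is not of the form $u^r$ with $r\ge 2$. $\mathcal W_n$ is the set of primitive words of length $n$ whose first letter is the smallest letter $a_w$ occurring in $w$ and whose last letter is different from $a_w$. Each $w\in\mathcal W_n$ decomposes uniquely as $w=B_1\cdots B_N$ into blocks: each block begins with a run of $a_w$ and ends just before the next run of $a_w$. For $j=1,\dots,N$ let $w^{(j)}=B_j\cdots B_NB_1\cdots B_{j-1}$; the rank $r_j(w)$ is the rank of $w^{(j)}$ among $w^{(1)},\dots,w^{(N)}$ in increasing lexicographic order (rank 1 = smallest). The block rotation is $\beta w=B_2\cdots B_NB_1$, and the block orbit of $w$ is $\langle w\rangle_\beta=\{w,\beta w,\dots,\beta^{N-1}w\}$. *)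

theory Defs
  imports Main "HOL-Probability.Probability_Mass_Function"
begin

text \<open>Letters: the alphabet a_1 < a_2 < ... is modelled by natural numbers (a_i = i) with
their usual order; a word is a list of letters. Lexicographic order (proper prefix is
smaller) is the library's lexordp.\<close>

definition primitive :: "nat list \<Rightarrow> bool" where
  "primitive w \<longleftrightarrow> \<not> (\<exists>u r. r \<ge> 2 \<and> w = concat (replicate r u))"

definition minletter :: "nat list \<Rightarrow> nat" where
  "minletter w = Min (set w)"

definition Wset :: "nat \<Rightarrow> nat list set" where
  "Wset n = {w. length w = n \<and> w \<noteq> [] \<and> primitive w \<and>
                 hd w = minletter w \<and> last w \<noteq> minletter w}"

text \<open>0-based positions where a run of the minimal letter begins (= block starts).\<close>
definition block_starts :: "nat list \<Rightarrow> nat list" where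
  "block_starts w = filter (\<lambda>i. w ! i = minletter w \<and> (i = 0 \<or> w ! (i - 1) \<noteq> minletter w))
                           [0..<length w]"

definition nblocks :: "nat list \<Rightarrow> nat" where
  "nblocks w = length (block_starts w)"

definition blocks :: "nat list \<Rightarrow> nat list list" where
  "blocks w = (let s = block_starts w @ [length w] in
     map (\<lambda>j. take (s ! (j + 1) - s ! j) (drop (s ! j) w)) [0..<nblocks w])"

definition block_rot :: "nat list \<Rightarrow> nat \<Rightarrow> nat list" where
  "block_rot w j = concat (rotate (j - 1) (blocks w))"

definition rank :: "nat list \<Rightarrow> nat \<Rightarrow> nat" where
  "rank w j = 1 + card {l \<in> {1..nblocks w}. ord_class.lexordp (block_rot w l) (block_rot w j)}"

definition beta :: "nat list \<Rightarrow> nat list" where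
  "beta w = concat (rotate1 (blocks w))"

definition block_orbit :: "nat list \<Rightarrow> nat list set" where
  "block_orbit w = {(beta ^^ k) w | k. k < nblocks w}"

end

theory Submission
  imports Defs
begin


definition bsm :: "nat \<Rightarrow> nat list \<Rightarrow> nat list" where
  "bsm m u = filter (\<lambda>i. u ! i = m \<and> (i = 0 \<or> u ! (i - 1) \<noteq> m)) [0..<length u]"

definition segs :: "nat list \<Rightarrow> nat list \<Rightarrow> nat list list" where
  "segs u s = map (\<lambda>j. take (s!(j+1) - s!j) (drop (s!j) u)) [0..<length s - 1]"

definition good :: "nat \<Rightarrow> nat list \<Rightarrow> bool" where
  "good m b \<longleftrightarrow> (\<exists>a x. a > 0 \<and> x \<noteq> [] \<and> m \<notin> set x \<and> b = replicate a m @ x)"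

lemma blocks_eq: "blocks u = segs u (bsm (minletter u) u @ [length u])"
  unfolding blocks_def segs_def nblocks_def block_starts_def bsm_def Let_def by simp

lemma good_props:
  assumes "good m b"
  shows "b \<noteq> []" "b ! 0 = m" "last b \<noteq> m" "hd b = m"
    "\<And>i. i < length b \<Longrightarrow> 0 < i \<Longrightarrow> b ! i = m \<Longrightarrow> b ! (i - 1) = m"
proof -
  obtain a x where ax: "a > 0" "x \<noteq> []" "m \<notin> set x" "b = replicate a m @ x"
    using assms good_def by auto
  show "b \<noteq> []" using ax by simp
  show "b ! 0 = m" using ax by (simp add: nth_append)
  show "hd b = m" using ax by (cases a) auto
  show "last b \<noteq> m" using ax by (metis last_append last_in_set)
  fix i assume i: "i < length b" "0 < i" "b ! i = m"
  have "i < a"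
  proof (rule ccontr)
    assume "\<not> i < a"
    then have "b ! i = x ! (i - a)" using ax by (simp add: nth_append)
    moreover have "i - a < length x" using i ax \<open>\<not> i < a\<close> by simp
    ultimately show False using i ax nth_mem by metis
  qed
  then have "i - 1 < a" by simp
  then show "b ! (i - 1) = m" using ax by (simp add: nth_append)
qed

lemma bsm_append:
  assumes g: "good m b" and r: "r = [] \<or> hd r = m"
  shows "bsm m (b @ r) = 0 # map (\<lambda>i. i + length b) (bsm m r)"
proof -
  let ?P = "\<lambda>i. (b @ r) ! i = m \<and> (i = 0 \<or> (b @ r) ! (i - 1) \<noteq> m)"
  have lb: "length b > 0" using good_props(1)[OF g] by simp
  have up: "[0..<length (b @ r)] = [0..<length b] @ map (\<lambda>i. i + length b) [0..<length r]"
  proof -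
    have 1: "[0..<length b + length r] = [0..<length b] @ [length b..<length b + length r]"
      by (rule upt_add_eq_append) simp
    have 2: "map (\<lambda>i. i + length b) [0..<length r] = [length b..<length b + length r]"
      by (simp only: map_add_upt add.commute)
    show ?thesis using 1 2 by simp
  qed
  have f1: "filter ?P [0..<length b] = [0]"
  proof -
    have "[0..<length b] = 0 # [1..<length b]" using upt_conv_Cons[OF lb] by simp
    moreover have "filter ?P [1..<length b] = []"
    proof (rule filter_False, intro ballI)
      fix i assume "i \<in> set [1..<length b]"
      then have i: "0 < i" "i < length b" by auto
      have "i - 1 < length b" using i by simp
      then show "\<not> ?P i" using good_props(5)[OF g i(2) i(1)] i by (simp add: nth_append)
    qed
    moreover have "?P 0" using good_props(2)[OF g] lb by (simp add: nth_append)
    ultimately show ?thesis by simp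
  qed
  have f2: "filter ?P (map (\<lambda>i. i + length b) [0..<length r])
      = map (\<lambda>i. i + length b) (bsm m r)"
    unfolding bsm_def filter_map comp_def
  proof (rule arg_cong[where f="map _"], rule filter_cong[OF refl])
    fix i assume "i \<in> set [0..<length r]"
    then have i: "i < length r" by simp
    show "?P (i + length b) = (r ! i = m \<and> (i = 0 \<or> r ! (i - 1) \<noteq> m))"
    proof (cases i)
      case 0
      have "(b @ r) ! (length b - 1) = last b" using lb by (simp add: nth_append last_conv_nth)
      then show ?thesis using 0 good_props(3)[OF g] lb by (simp add: nth_append)
    next
      case (Suc j)
      then have "i + length b - 1 = j + length b" by simp
      then show ?thesis using Suc by (simp add: nth_append)
    qed
  qed
  have "bsm m (b @ r) = filter ?P [0..<length (b @ r)]" unfolding bsm_def ..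
  also have "\<dots> = filter ?P [0..<length b] @ filter ?P (map (\<lambda>i. i + length b) [0..<length r])"
    by (simp only: up filter_append)
  also have "\<dots> = [0] @ map (\<lambda>i. i + length b) (bsm m r)" by (simp only: f1 f2)
  finally show ?thesis by simp
qed

lemma segs_cons:
  assumes "s' \<noteq> []" "s' ! 0 = 0"
  shows "segs (b @ r) (0 # map (\<lambda>i. i + length b) s') = b # segs r s'"
proof (rule nth_equalityI)
  show "length (segs (b @ r) (0 # map (\<lambda>i. i + length b) s')) = length (b # segs r s')"
    using assms by (simp add: segs_def)
next
  fix j assume j: "j < length (segs (b @ r) (0 # map (\<lambda>i. i + length b) s'))"
  then have j': "j < length s'" by (simp add: segs_def)
  show "segs (b @ r) (0 # map (\<lambda>i. i + length b) s') ! j = (b # segs r s') ! j"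
  proof (cases j)
    case 0
    then show ?thesis using assms j' by (simp add: segs_def)
  next
    case (Suc t)
    then have t: "t + 1 < length s'" using j' by simp
    have nt: "[0..<length s' - 1] ! t = t" using t by simp
    have "segs (b @ r) (0 # map (\<lambda>i. i + length b) s') ! j
        = take (s' ! (t+1) - s' ! t) (drop (s' ! t + length b) (b @ r))"
      using Suc t by (simp add: segs_def nth_Cons')
    also have "\<dots> = take (s' ! (t+1) - s' ! t) (drop (s' ! t) r)"
      by (simp add: add.commute)
    also have "\<dots> = (b # segs r s') ! j" using Suc t nt by (simp add: segs_def)
    finally show ?thesis .
  qed
qed

lemma segs_concat:
  assumes "\<forall>c\<in>set cs. good m c"
  shows "segs (concat cs) (bsm m (concat cs) @ [length (concat cs)]) = cs"
  using assms
proof (induction cs)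
  case Nil
  then show ?case by (simp add: segs_def bsm_def)
next
  case (Cons c cs)
  let ?r = "concat cs"
  have gc: "good m c" using Cons.prems by simp
  have r: "?r = [] \<or> hd ?r = m"
  proof (cases cs)
    case Nil then show ?thesis by simp
  next
    case (Cons c' cs')
    then have "good m c'" using \<open>\<forall>c\<in>set (c # cs). good m c\<close> by simp
    then show ?thesis using Cons good_props(1,4) by simp
  qed
  have s0: "(bsm m ?r @ [length ?r]) ! 0 = 0"
  proof (cases cs)
    case Nil then show ?thesis by (simp add: bsm_def)
  next
    case (Cons c' cs')
    then have g': "good m c'" using \<open>\<forall>c\<in>set (c # cs). good m c\<close> by simp
    have r': "concat cs' = [] \<or> hd (concat cs') = m"
    proof (cases cs')
      case Nil then show ?thesis by simp
    next
      case (Cons c'' cs'')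
      then have "good m c''" using \<open>\<forall>c\<in>set (c # cs). good m c\<close> \<open>cs = c' # cs'\<close> by simp
      then show ?thesis using Cons good_props(1,4) by simp
    qed
    show ?thesis using bsm_append[OF g' r'] Cons by simp
  qed
  have "bsm m (concat (c # cs)) @ [length (concat (c # cs))]
      = 0 # map (\<lambda>i. i + length c) (bsm m ?r @ [length ?r])"
    using bsm_append[OF gc r] by simp
  then have "segs (concat (c # cs)) (bsm m (concat (c # cs)) @ [length (concat (c # cs))])
      = c # segs ?r (bsm m ?r @ [length ?r])"
    using segs_cons[OF _ s0, of c ?r] by (simp add: add.commute)
  then show ?case using Cons by simp
qed

lemma decomp_exists:
  "u \<noteq> [] \<Longrightarrow> hd u = m \<Longrightarrow> last u \<noteq> m \<Longrightarrow> \<exists>cs. concat cs = u \<and> (\<forall>c\<in>set cs. good m c)"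
proof (induction "length u" arbitrary: u rule: less_induct)
  case less
  define a where "a = length (takeWhile (\<lambda>x. x = m) u)"
  define r1 where "r1 = dropWhile (\<lambda>x. x = m) u"
  define x where "x = takeWhile (\<lambda>y. y \<noteq> m) r1"
  define r where "r = dropWhile (\<lambda>y. y \<noteq> m) r1"
  have tw: "takeWhile (\<lambda>x. x = m) u = replicate a m"
  proof -
    have "\<forall>y\<in>set (takeWhile (\<lambda>x. x = m) u). y = m" by (auto dest: set_takeWhileD)
    then show ?thesis unfolding a_def by (simp add: replicate_length_same)
  qed
  have u1: "u = takeWhile (\<lambda>x. x = m) u @ r1" by (simp add: r1_def)
  have r1e: "r1 = x @ r" by (simp add: x_def r_def)
  have u: "u = replicate a m @ x @ r" using u1 r1e tw by simp
  have a0: "a > 0" using less.prems unfolding a_def by (cases u) auto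
  have r1ne: "r1 \<noteq> []"
  proof
    assume "r1 = []"
    then have "u = replicate a m" using u1 tw by simp
    then show False using less.prems a0 by simp
  qed
  have hr1: "hd r1 \<noteq> m" using hd_dropWhile[of "\<lambda>x. x = m" u] r1ne unfolding r1_def by simp
  have xne: "x \<noteq> []" using r1ne hr1 unfolding x_def by (cases r1) auto
  have mx: "m \<notin> set x" unfolding x_def by (auto dest: set_takeWhileD)
  have gb: "good m (replicate a m @ x)" using a0 xne mx good_def by blast
  show ?case
  proof (cases "r = []")
    case True
    then show ?thesis using u gb by (intro exI[of _ "[replicate a m @ x]"]) simp
  next
    case False
    have hr: "hd r = m" using hd_dropWhile[of "\<lambda>y. y \<noteq> m" r1] False unfolding r_def by simp
    have lr: "last r \<noteq> m" using less.prems(3) u False by simp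
    have len: "length r < length u" using u xne by simp
    obtain cs where "concat cs = r" "\<forall>c\<in>set cs. good m c"
      using less.hyps[OF len False hr lr] by blast
    then show ?thesis using u gb by (intro exI[of _ "(replicate a m @ x) # cs"]) simp
  qed
qed



lemma blocks_concat:
  assumes "\<forall>c\<in>set cs. good m c" "minletter (concat cs) = m"
  shows "blocks (concat cs) = cs"
  using segs_concat[OF assms(1)] assms(2) blocks_eq by simp

lemma length_blocks: "length (blocks u) = nblocks u"
  by (simp add: blocks_def Let_def)

lemma mod_arith: "0 < (N::nat) \<Longrightarrow> s < N \<Longrightarrow> ((s + N - c mod N) mod N + c) mod N = s"
proof -
  assume N: "0 < N" "s < N"
  have cm: "c mod N < N" using N by simp
  have "((s + N - c mod N) mod N + c) mod N = (s + N - c mod N + c) mod N"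
    by (simp add: mod_add_left_eq)
  also have "s + N - c mod N + c = s + N + (c div N) * N"
    using cm div_mult_mod_eq[of c N] by linarith
  also have "(s + N + (c div N) * N) mod N = s" using N by simp
  finally show ?thesis .
qed

lemma corollary1_aux:
  fixes w :: "nat list" and n N i k :: nat
  assumes "w \<in> Wset n"
    and "nblocks w = N"
    and "card (block_orbit w) = N"
    and "i \<in> {1..N}" and "k \<in> {1..N}"
  shows "measure_pmf.prob (pmf_of_set (block_orbit w)) {v. rank v k = i} = 1 / real N"
proof -
  define m0 where "m0 = minletter w"
  have w: "w \<noteq> []" "hd w = m0" "last w \<noteq> m0" using assms(1) unfolding Wset_def m0_def by auto
  obtain bs where bs: "concat bs = w" "\<forall>c\<in>set bs. good m0 c" using decomp_exists[OF w] by blast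
  define R where "R j = concat (rotate j bs)" for j
  have minR: "minletter (R j) = m0" for j
    unfolding R_def m0_def minletter_def by (simp add: bs(1)[symmetric])
  have blR: "blocks (R j) = rotate j bs" for j
    unfolding R_def using blocks_concat[of "rotate j bs" m0] bs(2) minR unfolding R_def by simp
  have bw: "blocks w = bs" using blR[of 0] unfolding R_def using bs by simp
  have lbs: "length bs = N" using bw length_blocks assms(2) by metis
  have N0: "0 < N" using assms(5) by simp
  have nbR: "nblocks (R j) = N" for j using blR[of j] length_blocks lbs by (metis length_rotate)
  have betaR: "beta (R j) = R (Suc j)" for j unfolding beta_def blR by (simp add: R_def)
  have iterR: "(beta ^^ j) w = R j" for j
  proof (induction j)
    case 0 show ?case by (simp add: R_def bs(1))
  next
    case (Suc j) then show ?case by (simp add: betaR)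
  qed
  define Ob where "Ob = block_orbit w"
  have Ob: "Ob = R ` {..<N}" unfolding Ob_def block_orbit_def iterR assms(2) by auto
  have finO: "finite Ob" using Ob by simp
  have cardO: "card Ob = N" using assms(3) Ob_def by simp
  have Oone: "Ob \<noteq> {}" using Ob N0 by auto
  have injR: "inj_on R {..<N}" using cardO Ob by (simp add: inj_on_iff_eq_card)
  have perR: "R t = R (t mod N)" for t unfolding R_def using rotate_conv_mod lbs by metis
  have brR: "block_rot (R j) l = R (l - 1 + j)" for j l
    unfolding block_rot_def blR by (simp add: R_def rotate_rotate)
  have cover: "(\<lambda>t. R (t + c)) ` {..<N} = Ob" for c
  proof
    show "(\<lambda>t. R (t + c)) ` {..<N} \<subseteq> Ob"
    proof
      fix y assume "y \<in> (\<lambda>t. R (t + c)) ` {..<N}"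
      then obtain t where t: "y = R (t + c)" by auto
      have "(t + c) mod N < N" using N0 by simp
      then show "y \<in> Ob" unfolding Ob t using perR[of "t + c"] by blast
    qed
    show "Ob \<subseteq> (\<lambda>t. R (t + c)) ` {..<N}"
    proof
      fix y assume "y \<in> Ob"
      then obtain s where s: "s < N" "y = R s" using Ob by auto
      define t where "t = (s + N - c mod N) mod N"
      have "R (t + c) = R s" using perR[of "t + c"] mod_arith[OF N0 s(1), of c] t_def by simp
      moreover have "t < N" using t_def N0 by simp
      ultimately show "y \<in> (\<lambda>t. R (t + c)) ` {..<N}" using s by force
    qed
  qed
  have brimg: "(\<lambda>l. block_rot v l) ` {1..N} = Ob" if vO: "v \<in> Ob" for v
  proof -
    obtain j where j: "v = R j" using vO Ob by auto
    have "(\<lambda>l. block_rot v l) ` {1..N} = (\<lambda>l. block_rot v l) ` (Suc ` {..<N})"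
      by (simp add: image_Suc_lessThan)
    also have "\<dots> = (\<lambda>t. R (t + j)) ` {..<N}" unfolding j brR by (simp add: image_image)
    finally show ?thesis using cover by simp
  qed
  define \<rho> where "\<rho> y = 1 + card {z \<in> Ob. ord_class.lexordp z y}" for y :: "nat list"
  have rank_eq: "rank v k = \<rho> (block_rot v k)" if vO: "v \<in> Ob" for v
  proof -
    obtain j where j: "v = R j" using vO Ob by auto
    have inj: "inj_on (\<lambda>l. block_rot v l) {1..N}"
      using brimg[OF vO] cardO by (simp add: inj_on_iff_eq_card)
    have "(\<lambda>l. block_rot v l) ` {l \<in> {1..N}. ord_class.lexordp (block_rot v l) (block_rot v k)}
        = {z \<in> Ob. ord_class.lexordp z (block_rot v k)}"
      using brimg[OF vO] by auto
    moreover have "card ((\<lambda>l. block_rot v l) ` {l \<in> {1..N}. ord_class.lexordp (block_rot v l) (block_rot v k)})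
        = card {l \<in> {1..N}. ord_class.lexordp (block_rot v l) (block_rot v k)}"
      by (rule card_image, rule inj_on_subset[OF inj]) auto
    ultimately show ?thesis unfolding rank_def \<rho>_def j nbR by simp
  qed
  have rho_range: "\<rho> y \<in> {1..N}" if "y \<in> Ob" for y
  proof -
    have "{z \<in> Ob. ord_class.lexordp z y} \<subseteq> Ob - {y}" using lexordp_irreflexive'[of y] by auto
    then have "card {z \<in> Ob. ord_class.lexordp z y} \<le> card (Ob - {y})"
      using finO by (intro card_mono) auto
    also have "\<dots> = N - 1" using cardO that finO by simp
    finally show ?thesis unfolding \<rho>_def using N0 by simp
  qed
  have rho_less: "\<rho> y < \<rho> y'" if "y \<in> Ob" "y' \<in> Ob" "ord_class.lexordp y y'" for y y'
  proof -
    have "{z \<in> Ob. ord_class.lexordp z y} \<subset> {z \<in> Ob. ord_class.lexordp z y'}"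
    proof
      show "{z \<in> Ob. ord_class.lexordp z y} \<subseteq> {z \<in> Ob. ord_class.lexordp z y'}"
        using that(3) by (auto intro: lexordp_trans)
      have "y \<in> {z \<in> Ob. ord_class.lexordp z y'}" using that by simp
      moreover have "y \<notin> {z \<in> Ob. ord_class.lexordp z y}" using lexordp_irreflexive'[of y] by simp
      ultimately show "{z \<in> Ob. ord_class.lexordp z y} \<noteq> {z \<in> Ob. ord_class.lexordp z y'}" by blast
    qed
    then show ?thesis unfolding \<rho>_def using finO by (simp add: psubset_card_mono)
  qed
  have rho_inj: "inj_on \<rho> Ob"
  proof (rule inj_onI)
    fix y y' assume yy: "y \<in> Ob" "y' \<in> Ob" "\<rho> y = \<rho> y'"
    show "y = y'" using lexordp_linear[of y y'] rho_less[OF yy(1,2)] rho_less[OF yy(2,1)] yy(3)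
      by fastforce
  qed
  have rho_img: "\<rho> ` Ob = {1..N}"
    using rho_range rho_inj cardO by (intro card_subset_eq) (auto simp: card_image)
  obtain y0 where y0: "y0 \<in> Ob" "\<rho> y0 = i" using rho_img assms(4) by (metis imageE)
  define \<sigma> where "\<sigma> v = block_rot v k" for v
  have sig_img: "\<sigma> ` Ob = Ob"
  proof -
    have "\<sigma> ` Ob = (\<lambda>j. R (j + (k - 1))) ` {..<N}"
      unfolding Ob \<sigma>_def image_image brR by (simp add: add.commute)
    then show ?thesis using cover by simp
  qed
  have sig_inj: "inj_on \<sigma> Ob" using sig_img finO by (simp add: inj_on_iff_eq_card)
  obtain v0 where v0: "v0 \<in> Ob" "\<sigma> v0 = y0" using sig_img y0(1) by (metis imageE)
  have ev: "Ob \<inter> {v. rank v k = i} = {v0}"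
  proof
    show "Ob \<inter> {v. rank v k = i} \<subseteq> {v0}"
    proof
      fix v assume v: "v \<in> Ob \<inter> {v. rank v k = i}"
      then have "\<rho> (\<sigma> v) = \<rho> y0" using rank_eq y0(2) \<sigma>_def by auto
      moreover have "\<sigma> v \<in> Ob" using v sig_img by auto
      ultimately have "\<sigma> v = \<sigma> v0" using rho_inj y0(1) v0(2) inj_onD by metis
      then show "v \<in> {v0}" using sig_inj v v0(1) inj_onD by fastforce
    qed
    show "{v0} \<subseteq> Ob \<inter> {v. rank v k = i}" using v0 rank_eq y0 \<sigma>_def by auto
  qed
  show ?thesis
    using measure_pmf_of_set[OF Oone finO, of "{v. rank v k = i}"] ev cardO Ob_def by simp
qed


theorem corollary1:
  fixes w :: "nat list" and n N i k :: nat
  assumes "w \<in> Wset n"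
    and "nblocks w = N"
    and "card (block_orbit w) = N"
    and "i \<in> {1..N}" and "k \<in> {1..N}"
  shows "measure_pmf.prob (pmf_of_set (block_orbit w)) {v. rank v k = i} = 1 / real N"
  using corollary1_aux[OF assms] .

end
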